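(* For all $n\ge1$, $$h_n=\frac52nH_n+\frac32P_n-2H_n,\qquad p_n=\frac52nP_n-\frac32P_n=\frac{5n-3}{2}P_n.$$
   Context: Let $s=\sqrt3/2$. Consider the standard triangular lattice in the plane whose vertices are the points $(a+b/2,\,bs)$ with $a,b\in\mathbb Z$ and whose edges are the unit segments joining lattice points in the directions $0^\circ,60^\circ,120^\circ$; it divides the plane into unit equilateral triangles called cells. A small tile is a single cell; a large tile is an equilateral triangle of side $2$ whose vertices are lattice points (so it is a union of $4$ cells; it may point up or down). For a region $R$ that is a finite union of cells, a tiling of $R$ is a finite set of small and large tiles, each contained in $R$, with pairwise disjoint interiors and union equal to $R$. For $n\ge1$, the region $H_n$ is the union of the trapezoid with vertices $(0,0),(n,0),(n-\tfrac12,s),(\tfrac12,s)$ and the trapezoid with vertices $(\tfrac12,s),(n-\tfrac12,s),(n,2s),(0,2s)$ ($4n-2$ cells; for $n=1$ two unit triangles meeting at a point), and $P_n$ is $H_n$ with the cell with vertices $(n-1,0),(n,0),(n-\tfrac12,s)$ removed. $H_n$ and $P_n$ also denote the numbers of tilings of these regions; thus $H_n=\frac{(1+\sqrt2)^n+(1-\sqrt2)^n}{2}$ and $P_n=\frac{(1+\sqrt2)^n-(1-\sqrt2)^n}{2\sqrt2}$. Define $h_n$ (resp. $p_n$) as the sum, over all tilings of $H_n$ (resp. $P_n$), of the total number of tiles in the tiling. *)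

theory Defs
  imports Complex_Main
begin

text \<open>A lattice point is indexed by (a,b) in Z^2,
  standing for the plane point (a + b/2, b*sqrt 3/2).
  Up a b  is the cell with lattice vertices (a,b), (a+1,b), (a,b+1);
  Dn a b  is the cell with lattice vertices (a+1,b), (a,b+1), (a+1,b+1).\<close>

datatype cell = Up int int | Dn int int

text \<open>Large tiles (side 2 triangles with lattice vertices), as sets of 4 cells.
  bigUp a b has lattice vertices (a,b), (a+2,b), (a,b+2);
  bigDn a b has lattice vertices (a+2,b), (a,b+2), (a+2,b+2).\<close>

definition bigUp :: "int \<Rightarrow> int \<Rightarrow> cell set" where
  "bigUp a b = {Up a b, Up (a+1) b, Up a (b+1), Dn a b}"

definition bigDn :: "int \<Rightarrow> int \<Rightarrow> cell set" where
  "bigDn a b = {Dn (a+1) b, Dn a (b+1), Dn (a+1) (b+1), Up (a+1) (b+1)}"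

definition tiles :: "cell set set" where
  "tiles = {{c} | c. True} \<union> {bigUp a b | a b. True} \<union> {bigDn a b | a b. True}"

text \<open>A tiling of a region R (finite set of cells): a finite set of tiles, each
  contained in R, with pairwise disjoint interiors (= disjoint cell sets),
  whose union is R.\<close>

definition is_tiling :: "cell set \<Rightarrow> cell set set \<Rightarrow> bool" where
  "is_tiling R T \<longleftrightarrow> finite T \<and> T \<subseteq> tiles \<and> (\<forall>t\<in>T. t \<subseteq> R)
      \<and> pairwise disjnt T \<and> \<Union>T = R"

definition tilings :: "cell set \<Rightarrow> cell set set set" where
  "tilings R = {T. is_tiling R T}"

definition num_tilings :: "cell set \<Rightarrow> nat" where
  "num_tilings R = card (tilings R)"

definition total_tiles :: "cell set \<Rightarrow> nat" where
  "total_tiles R = (\<Sum>T\<in>tilings R. card T)"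

text \<open>P_n removes the cell with vertices (n-1,0),(n,0),(n-1/2,s), i.e. Up (n-1) 0.\<close>

definition Hreg :: "nat \<Rightarrow> cell set" where
  "Hreg n = {Up a 0 | a. 0 \<le> a \<and> a \<le> int n - 1}
          \<union> {Dn a 0 | a. 0 \<le> a \<and> a \<le> int n - 2}
          \<union> {Dn a 1 | a. -1 \<le> a \<and> a \<le> int n - 2}
          \<union> {Up a 1 | a. 0 \<le> a \<and> a \<le> int n - 2}"

definition Preg :: "nat \<Rightarrow> cell set" where
  "Preg n = Hreg n - {Up (int n - 1) 0}"

abbreviation H :: "nat \<Rightarrow> nat" where "H n \<equiv> num_tilings (Hreg n)"
abbreviation P :: "nat \<Rightarrow> nat" where "P n \<equiv> num_tilings (Preg n)"
abbreviation hsum :: "nat \<Rightarrow> nat" where "hsum n \<equiv> total_tiles (Hreg n)"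
abbreviation psum :: "nat \<Rightarrow> nat" where "psum n \<equiv> total_tiles (Preg n)"

end

theory Submission
  imports Defs
begin

lemma tilings_finite: "finite R \<Longrightarrow> finite (tilings R)"
  by (rule finite_subset[of _ "Pow (Pow R)"]) (auto simp: tilings_def is_tiling_def)

lemma empty_notin_tiles: "{} \<notin> tiles"
  by (auto simp: tiles_def bigUp_def bigDn_def)

lemma tilings_empty: "tilings {} = {{}}"
proof -
  have "T = {}" if "is_tiling {} T" for T
    using that empty_notin_tiles by (auto simp: is_tiling_def)
  moreover have "is_tiling {} {}" by (auto simp: is_tiling_def pairwise_def)
  ultimately show ?thesis by (auto simp: tilings_def)
qed

lemma num_empty: "num_tilings {} = 1" and total_empty: "total_tiles {} = 0"
  by (auto simp: num_tilings_def total_tiles_def tilings_empty)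

lemma notin_sub: "c \<in> t \<Longrightarrow> T' \<in> tilings (R - t) \<Longrightarrow> t \<notin> T'"
  by (auto simp: tilings_def is_tiling_def)

lemma insert_tiling:
  assumes "t \<in> tiles" "t \<subseteq> R" "T' \<in> tilings (R - t)"
  shows "insert t T' \<in> tilings R"
  using assms unfolding tilings_def is_tiling_def pairwise_def disjnt_def
  by auto

lemma tilings_decomp:
  assumes "c \<in> R"
  shows "tilings R = (\<Union>t\<in>{t\<in>tiles. c\<in>t \<and> t\<subseteq>R}. insert t ` tilings (R - t))"
proof
  show "(\<Union>t\<in>{t\<in>tiles. c\<in>t \<and> t\<subseteq>R}. insert t ` tilings (R - t)) \<subseteq> tilings R"
    using insert_tiling by blast
next
  show "tilings R \<subseteq> (\<Union>t\<in>{t\<in>tiles. c\<in>t \<and> t\<subseteq>R}. insert t ` tilings (R - t))"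
  proof
    fix T assume T: "T \<in> tilings R"
    hence iT: "is_tiling R T" by (simp add: tilings_def)
    then obtain t where t: "t \<in> T" "c \<in> t" using assms by (auto simp: is_tiling_def)
    have tt: "t \<in> tiles" "t \<subseteq> R" using iT t by (auto simp: is_tiling_def)
    have "is_tiling (R - t) (T - {t})"
    proof -
      have "\<Union>(T - {t}) = R - t"
      proof
        show "\<Union>(T - {t}) \<subseteq> R - t"
        proof
          fix x assume "x \<in> \<Union>(T - {t})"
          then obtain s where s: "s \<in> T" "s \<noteq> t" "x \<in> s" by auto
          have "disjnt s t" using iT s t unfolding is_tiling_def pairwise_def by blast
          thus "x \<in> R - t" using s iT by (auto simp: is_tiling_def disjnt_def)
        qed
      next
        show "R - t \<subseteq> \<Union>(T - {t})" using iT by (auto simp: is_tiling_def)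
      qed
      moreover have "\<forall>s\<in>T - {t}. s \<subseteq> R - t"
      proof
        fix s assume s: "s \<in> T - {t}"
        have "disjnt s t" using iT s t unfolding is_tiling_def pairwise_def by blast
        thus "s \<subseteq> R - t" using s iT by (auto simp: is_tiling_def disjnt_def)
      qed
      ultimately show ?thesis using iT by (auto simp: is_tiling_def pairwise_def)
    qed
    hence "T - {t} \<in> tilings (R - t)" by (simp add: tilings_def)
    moreover have "T = insert t (T - {t})" using t by auto
    ultimately show "T \<in> (\<Union>t\<in>{t\<in>tiles. c\<in>t \<and> t\<subseteq>R}. insert t ` tilings (R - t))"
      using tt t by blast
  qed
qed

lemma count_step:
  assumes fin: "finite R" and cR: "c \<in> R" and C: "{t\<in>tiles. c\<in>t \<and> t\<subseteq>R} = C"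
  shows "num_tilings R = (\<Sum>t\<in>C. num_tilings (R - t))"
    and "total_tiles R = (\<Sum>t\<in>C. total_tiles (R - t) + num_tilings (R - t))"
proof -
  have finC: "finite C" using C fin by (rule_tac finite_subset[of _ "Pow R"]) auto
  have dec: "tilings R = (\<Union>t\<in>C. insert t ` tilings (R - t))"
    using tilings_decomp[OF cR] C by simp
  have ct: "c \<in> t" if "t \<in> C" for t using that C by auto
  have fin2: "\<forall>t\<in>C. finite (insert t ` tilings (R - t))"
    using fin by (auto intro: tilings_finite)
  have disj: "\<forall>i\<in>C. \<forall>j\<in>C. i \<noteq> j \<longrightarrow> insert i ` tilings (R - i) \<inter> insert j ` tilings (R - j) = {}"
  proof (intro ballI impI)
    fix i j assume ij: "i \<in> C" "j \<in> C" "i \<noteq> j"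
    show "insert i ` tilings (R - i) \<inter> insert j ` tilings (R - j) = {}"
    proof (rule ccontr)
      assume "insert i ` tilings (R - i) \<inter> insert j ` tilings (R - j) \<noteq> {}"
      then obtain T1 T2 where T: "T1 \<in> tilings (R - i)" "T2 \<in> tilings (R - j)" "insert i T1 = insert j T2"
        by auto
      hence "j \<in> T1" using ij by auto
      hence "j \<subseteq> R - i" using T(1) by (auto simp: tilings_def is_tiling_def)
      thus False using ct ij by auto
    qed
  qed
  have inj: "inj_on (insert t) (tilings (R - t))" if "t \<in> C" for t
  proof
    fix T1 T2 assume "T1 \<in> tilings (R - t)" "T2 \<in> tilings (R - t)" "insert t T1 = insert t T2"
    moreover have "t \<notin> T1" "t \<notin> T2" using notin_sub ct that calculation by blast+
    ultimately show "T1 = T2" by (metis insert_ident)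
  qed
  show "num_tilings R = (\<Sum>t\<in>C. num_tilings (R - t))"
    unfolding num_tilings_def dec
    by (subst card_UN_disjoint[OF finC fin2 disj]) (auto intro!: sum.cong card_image inj)
  have "total_tiles R = (\<Sum>t\<in>C. \<Sum>T\<in>insert t ` tilings (R - t). card T)"
    unfolding total_tiles_def dec by (rule sum.UNION_disjoint[OF finC fin2 disj])
  also have "\<dots> = (\<Sum>t\<in>C. total_tiles (R - t) + num_tilings (R - t))"
  proof (rule sum.cong[OF refl])
    fix t assume t: "t \<in> C"
    have "(\<Sum>T\<in>insert t ` tilings (R - t). card T) = (\<Sum>T\<in>tilings (R - t). card (insert t T))"
      by (rule sum.reindex_cong[OF inj[OF t]]) auto
    also have "\<dots> = (\<Sum>T\<in>tilings (R - t). card T + 1)"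
    proof (rule sum.cong[OF refl])
      fix T assume T: "T \<in> tilings (R - t)"
      have "finite T" using T by (auto simp: tilings_def is_tiling_def)
      thus "card (insert t T) = card T + 1" using notin_sub[OF ct[OF t] T] by simp
    qed
    also have "\<dots> = total_tiles (R - t) + num_tilings (R - t)"
      by (simp only: sum.distrib total_tiles_def num_tilings_def card_eq_sum)
    finally show "(\<Sum>T\<in>insert t ` tilings (R - t). card T) = total_tiles (R - t) + num_tilings (R - t)" .
  qed
  finally show "total_tiles R = (\<Sum>t\<in>C. total_tiles (R - t) + num_tilings (R - t))" .
qed


lemma step1:
  assumes "finite R" "c \<in> R" "{t\<in>tiles. c\<in>t \<and> t\<subseteq>R} = {{c}}"
  shows "num_tilings R = num_tilings (R - {c})"
    and "total_tiles R = total_tiles (R - {c}) + num_tilings (R - {c})"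
  using count_step[OF assms] by simp_all

lemma step2:
  assumes "finite R" "c \<in> R" "{t\<in>tiles. c\<in>t \<and> t\<subseteq>R} = {{c}, t}" "{c} \<noteq> t"
  shows "num_tilings R = num_tilings (R - {c}) + num_tilings (R - t)"
    and "total_tiles R = total_tiles (R - {c}) + num_tilings (R - {c}) + total_tiles (R - t) + num_tilings (R - t)"
  using count_step[OF assms(1-3)] assms(4) by simp_all

lemma tiles_C:
  assumes "c \<in> R"
  shows "{t\<in>tiles. c\<in>t \<and> t\<subseteq>R} = {{c}} \<union> {t. \<exists>a b. t = bigUp a b \<and> c \<in> t \<and> t \<subseteq> R}
           \<union> {t. \<exists>a b. t = bigDn a b \<and> c \<in> t \<and> t \<subseteq> R}"
  using assms by (auto simp: tiles_def)

lemma setU1: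
  assumes "\<And>a b. (c \<in> f a b \<and> f a b \<subseteq> R) \<longleftrightarrow> (a = a0 \<and> b = b0)"
  shows "{t. \<exists>a b. t = f a b \<and> c \<in> t \<and> t \<subseteq> R} = {f a0 b0}"
proof (rule set_eqI, rule iffI)
  fix x assume "x \<in> {t. \<exists>a b. t = f a b \<and> c \<in> t \<and> t \<subseteq> R}"
  then obtain a b where "x = f a b" "c \<in> f a b" "f a b \<subseteq> R" by blast
  thus "x \<in> {f a0 b0}" using assms[of a b] by simp
next
  fix x assume "x \<in> {f a0 b0}"
  thus "x \<in> {t. \<exists>a b. t = f a b \<and> c \<in> t \<and> t \<subseteq> R}" using assms[of a0 b0] by blast
qed

lemma setU0:
  assumes "\<And>a b. \<not> (c \<in> f a b \<and> f a b \<subseteq> R)"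
  shows "{t. \<exists>a b. t = f a b \<and> c \<in> t \<and> t \<subseteq> R} = {}"
  using assms by blast

fun inR :: "int \<Rightarrow> int \<Rightarrow> cell \<Rightarrow> bool" where
  "inR i j (Up a b) = ((b = 0 \<and> 0 \<le> 2*a \<and> 2*a < i) \<or> (b = 1 \<and> 0 \<le> 2*a+1 \<and> 2*a+1 < j))"
| "inR i j (Dn a b) = ((b = 0 \<and> 0 \<le> 2*a+1 \<and> 2*a+1 < i) \<or> (b = 1 \<and> 0 \<le> 2*a+2 \<and> 2*a+2 < j))"

definition RR :: "int \<Rightarrow> int \<Rightarrow> cell set" where "RR i j = {c. inR i j c}"

lemma mem_RR [simp]: "c \<in> RR i j \<longleftrightarrow> inR i j c" by (simp add: RR_def)

lemma finite_RR: "finite (RR i j)"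
proof (rule finite_subset)
  show "RR i j \<subseteq> (\<lambda>a. Up a 0) ` {0..i} \<union> (\<lambda>a. Up a 1) ` {-1..j} \<union> (\<lambda>a. Dn a 0) ` {-1..i} \<union> (\<lambda>a. Dn a 1) ` {-1..j}"
  proof
    fix c assume "c \<in> RR i j"
    thus "c \<in> (\<lambda>a. Up a 0) ` {0..i} \<union> (\<lambda>a. Up a 1) ` {-1..j} \<union> (\<lambda>a. Dn a 0) ` {-1..i} \<union> (\<lambda>a. Dn a 1) ` {-1..j}"
      by (cases c) auto
  qed
qed auto

lemma bigUp_sub: "bigUp a b \<subseteq> RR i j \<longleftrightarrow> b = 0 \<and> 0 \<le> a \<and> 2*a+2 < i \<and> 2*a+1 < j"
  by (auto simp: bigUp_def)

lemma bigDn_sub: "bigDn a b \<subseteq> RR i j \<longleftrightarrow> b = 0 \<and> -1 \<le> a \<and> 2*a+3 < i \<and> 2*a+4 < j"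
  by (auto simp: bigDn_def)


lemma singleton_neq_bigUp: "{c} \<noteq> bigUp a b" by (auto simp: bigUp_def)
lemma singleton_neq_bigDn: "{c} \<noteq> bigDn a b" by (auto simp: bigDn_def)


lemma stepQ:
  fixes m :: int assumes m: "m \<ge> 2"
  shows "num_tilings (RR (2*m-1) (2*m-2)) = num_tilings (RR (2*m-2) (2*m-2)) + num_tilings (RR (2*m-4) (2*m-3))"
    and "total_tiles (RR (2*m-1) (2*m-2)) = total_tiles (RR (2*m-2) (2*m-2)) + num_tilings (RR (2*m-2) (2*m-2))
          + total_tiles (RR (2*m-4) (2*m-3)) + num_tilings (RR (2*m-4) (2*m-3))"
proof -
  have cR: "(Up (m-1) 0) \<in> (RR (2*m-1) (2*m-2))" using m by simp
  have k1: "((Up (m-1) 0) \<in> bigUp a b \<and> bigUp a b \<subseteq> (RR (2*m-1) (2*m-2))) \<longleftrightarrow> (a = m-2 \<and> b = 0)" for a b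
    using m unfolding bigUp_sub by (simp add: bigUp_def; arith?)
  have k2: "\<not> ((Up (m-1) 0) \<in> bigDn a b \<and> bigDn a b \<subseteq> (RR (2*m-1) (2*m-2)))" for a b
    using m unfolding bigDn_sub by (simp add: bigDn_def; arith?)
  have C: "{t\<in>tiles. (Up (m-1) 0)\<in>t \<and> t\<subseteq>(RR (2*m-1) (2*m-2))} = {{(Up (m-1) 0)}, (bigUp (m-2) 0)}"
    unfolding tiles_C[OF cR] setU1[OF k1] setU0[OF k2] by auto
  have r1: "(RR (2*m-1) (2*m-2)) - {(Up (m-1) 0)} = (RR (2*m-2) (2*m-2))"
    using m by (rule_tac set_eqI, (case_tac x; (auto; presburger?)))
  have r2: "(RR (2*m-1) (2*m-2)) - (bigUp (m-2) 0) = (RR (2*m-4) (2*m-3))"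
    using m by (rule_tac set_eqI, (case_tac x; (auto simp: bigUp_def; presburger?)))
  note s = step2[OF finite_RR cR C singleton_neq_bigUp]
  show "num_tilings (RR (2*m-1) (2*m-2)) = num_tilings (RR (2*m-2) (2*m-2)) + num_tilings (RR (2*m-4) (2*m-3))"
    using s(1) r1 r2 by simp
  show "total_tiles (RR (2*m-1) (2*m-2)) = total_tiles (RR (2*m-2) (2*m-2)) + num_tilings (RR (2*m-2) (2*m-2))
          + total_tiles (RR (2*m-4) (2*m-3)) + num_tilings (RR (2*m-4) (2*m-3))"
    using s(2) r1 r2 by simp
qed

lemma stepP:
  fixes m :: int assumes m: "m \<ge> 2"
  shows "num_tilings (RR (2*m-2) (2*m-1)) = num_tilings (RR (2*m-2) (2*m-2)) + num_tilings (RR (2*m-3) (2*m-4))"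
    and "total_tiles (RR (2*m-2) (2*m-1)) = total_tiles (RR (2*m-2) (2*m-2)) + num_tilings (RR (2*m-2) (2*m-2))
          + total_tiles (RR (2*m-3) (2*m-4)) + num_tilings (RR (2*m-3) (2*m-4))"
proof -
  have cR: "(Dn (m-2) 1) \<in> (RR (2*m-2) (2*m-1))" using m by simp
  have k1: "\<not> ((Dn (m-2) 1) \<in> bigUp a b \<and> bigUp a b \<subseteq> (RR (2*m-2) (2*m-1)))" for a b
    using m unfolding bigUp_sub by (simp add: bigUp_def; arith?)
  have k2: "((Dn (m-2) 1) \<in> bigDn a b \<and> bigDn a b \<subseteq> (RR (2*m-2) (2*m-1))) \<longleftrightarrow> (a = m-3 \<and> b = 0)" for a b
    using m unfolding bigDn_sub by (simp add: bigDn_def; arith?)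
  have C: "{t\<in>tiles. (Dn (m-2) 1)\<in>t \<and> t\<subseteq>(RR (2*m-2) (2*m-1))} = {{(Dn (m-2) 1)}, (bigDn (m-3) 0)}"
    unfolding tiles_C[OF cR] setU0[OF k1] setU1[OF k2] by auto
  have r1: "(RR (2*m-2) (2*m-1)) - {(Dn (m-2) 1)} = (RR (2*m-2) (2*m-2))"
    using m by (rule_tac set_eqI, (case_tac x; (auto; presburger?)))
  have r2: "(RR (2*m-2) (2*m-1)) - (bigDn (m-3) 0) = (RR (2*m-3) (2*m-4))"
    using m by (rule_tac set_eqI, (case_tac x; (auto simp: bigDn_def; presburger?)))
  note s = step2[OF finite_RR cR C singleton_neq_bigDn]
  show "num_tilings (RR (2*m-2) (2*m-1)) = num_tilings (RR (2*m-2) (2*m-2)) + num_tilings (RR (2*m-3) (2*m-4))"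
    using s(1) r1 r2 by simp
  show "total_tiles (RR (2*m-2) (2*m-1)) = total_tiles (RR (2*m-2) (2*m-2)) + num_tilings (RR (2*m-2) (2*m-2))
          + total_tiles (RR (2*m-3) (2*m-4)) + num_tilings (RR (2*m-3) (2*m-4))"
    using s(2) r1 r2 by simp
qed

lemma stepH:
  fixes m :: int assumes m: "m \<ge> 2"
  shows "num_tilings (RR (2*m-1) (2*m-1)) = num_tilings (RR (2*m-1) (2*m-2)) + num_tilings (insert (Up (m-1) 0) (RR (2*m-3) (2*m-4)))"
    and "total_tiles (RR (2*m-1) (2*m-1)) = total_tiles (RR (2*m-1) (2*m-2)) + num_tilings (RR (2*m-1) (2*m-2))
          + total_tiles (insert (Up (m-1) 0) (RR (2*m-3) (2*m-4))) + num_tilings (insert (Up (m-1) 0) (RR (2*m-3) (2*m-4)))"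
proof -
  have cR: "(Dn (m-2) 1) \<in> (RR (2*m-1) (2*m-1))" using m by simp
  have k1: "\<not> ((Dn (m-2) 1) \<in> bigUp a b \<and> bigUp a b \<subseteq> (RR (2*m-1) (2*m-1)))" for a b
    using m unfolding bigUp_sub by (simp add: bigUp_def; arith?)
  have k2: "((Dn (m-2) 1) \<in> bigDn a b \<and> bigDn a b \<subseteq> (RR (2*m-1) (2*m-1))) \<longleftrightarrow> (a = m-3 \<and> b = 0)" for a b
    using m unfolding bigDn_sub by (simp add: bigDn_def; arith?)
  have C: "{t\<in>tiles. (Dn (m-2) 1)\<in>t \<and> t\<subseteq>(RR (2*m-1) (2*m-1))} = {{(Dn (m-2) 1)}, (bigDn (m-3) 0)}"
    unfolding tiles_C[OF cR] setU0[OF k1] setU1[OF k2] by auto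
  have r1: "(RR (2*m-1) (2*m-1)) - {(Dn (m-2) 1)} = (RR (2*m-1) (2*m-2))"
    using m by (rule_tac set_eqI, (case_tac x; (auto; presburger?)))
  have r2: "(RR (2*m-1) (2*m-1)) - (bigDn (m-3) 0) = (insert (Up (m-1) 0) (RR (2*m-3) (2*m-4)))"
    using m by (rule_tac set_eqI, (case_tac x; (auto simp: bigDn_def; presburger?)))
  note s = step2[OF finite_RR cR C singleton_neq_bigDn]
  show "num_tilings (RR (2*m-1) (2*m-1)) = num_tilings (RR (2*m-1) (2*m-2)) + num_tilings (insert (Up (m-1) 0) (RR (2*m-3) (2*m-4)))"
    using s(1) r1 r2 by simp
  show "total_tiles (RR (2*m-1) (2*m-1)) = total_tiles (RR (2*m-1) (2*m-2)) + num_tilings (RR (2*m-1) (2*m-2))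
          + total_tiles (insert (Up (m-1) 0) (RR (2*m-3) (2*m-4))) + num_tilings (insert (Up (m-1) 0) (RR (2*m-3) (2*m-4)))"
    using s(2) r1 r2 by simp
qed

lemma stepF:
  fixes m :: int assumes m: "m \<ge> 1"
  shows "num_tilings (RR (2*m-1) (2*m)) = num_tilings (RR (2*m-1) (2*m-1))"
    and "total_tiles (RR (2*m-1) (2*m)) = total_tiles (RR (2*m-1) (2*m-1)) + num_tilings (RR (2*m-1) (2*m-1))"
proof -
  have cR: "(Up (m-1) 1) \<in> (RR (2*m-1) (2*m))" using m by simp
  have k1: "\<not> ((Up (m-1) 1) \<in> bigUp a b \<and> bigUp a b \<subseteq> (RR (2*m-1) (2*m)))" for a b
    using m unfolding bigUp_sub by (simp add: bigUp_def; arith?)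
  have k2: "\<not> ((Up (m-1) 1) \<in> bigDn a b \<and> bigDn a b \<subseteq> (RR (2*m-1) (2*m)))" for a b
    using m unfolding bigDn_sub by (simp add: bigDn_def; arith?)
  have C: "{t\<in>tiles. (Up (m-1) 1)\<in>t \<and> t\<subseteq>(RR (2*m-1) (2*m))} = {{(Up (m-1) 1)}}"
    unfolding tiles_C[OF cR] setU0[OF k1] setU0[OF k2] by auto
  have r1: "(RR (2*m-1) (2*m)) - {(Up (m-1) 1)} = (RR (2*m-1) (2*m-1))"
    using m by (rule_tac set_eqI, (case_tac x; (auto; presburger?)))
  note s = step1[OF _ cR C]
  show "num_tilings (RR (2*m-1) (2*m)) = num_tilings (RR (2*m-1) (2*m-1))"
    using s(1) r1 by (simp add: finite_RR)
  show "total_tiles (RR (2*m-1) (2*m)) = total_tiles (RR (2*m-1) (2*m-1)) + num_tilings (RR (2*m-1) (2*m-1))"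
    using s(2) r1 by (simp add: finite_RR)
qed

lemma stepE:
  fixes m :: int assumes m: "m \<ge> 2"
  shows "num_tilings (RR (2*m-2) (2*m-2)) = num_tilings (RR (2*m-3) (2*m-2))"
    and "total_tiles (RR (2*m-2) (2*m-2)) = total_tiles (RR (2*m-3) (2*m-2)) + num_tilings (RR (2*m-3) (2*m-2))"
proof -
  have cR: "(Dn (m-2) 0) \<in> (RR (2*m-2) (2*m-2))" using m by simp
  have k1: "\<not> ((Dn (m-2) 0) \<in> bigUp a b \<and> bigUp a b \<subseteq> (RR (2*m-2) (2*m-2)))" for a b
    using m unfolding bigUp_sub by (simp add: bigUp_def; arith?)
  have k2: "\<not> ((Dn (m-2) 0) \<in> bigDn a b \<and> bigDn a b \<subseteq> (RR (2*m-2) (2*m-2)))" for a b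
    using m unfolding bigDn_sub by (simp add: bigDn_def; arith?)
  have C: "{t\<in>tiles. (Dn (m-2) 0)\<in>t \<and> t\<subseteq>(RR (2*m-2) (2*m-2))} = {{(Dn (m-2) 0)}}"
    unfolding tiles_C[OF cR] setU0[OF k1] setU0[OF k2] by auto
  have r1: "(RR (2*m-2) (2*m-2)) - {(Dn (m-2) 0)} = (RR (2*m-3) (2*m-2))"
    using m by (rule_tac set_eqI, (case_tac x; (auto; presburger?)))
  note s = step1[OF _ cR C]
  show "num_tilings (RR (2*m-2) (2*m-2)) = num_tilings (RR (2*m-3) (2*m-2))"
    using s(1) r1 by (simp add: finite_RR)
  show "total_tiles (RR (2*m-2) (2*m-2)) = total_tiles (RR (2*m-3) (2*m-2)) + num_tilings (RR (2*m-3) (2*m-2))"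
    using s(2) r1 by (simp add: finite_RR)
qed

lemma stepX:
  fixes m :: int assumes m: "m \<ge> 2"
  shows "num_tilings (insert (Up (m-1) 0) (RR (2*m-3) (2*m-4))) = num_tilings (RR (2*m-3) (2*m-4))"
    and "total_tiles (insert (Up (m-1) 0) (RR (2*m-3) (2*m-4))) = total_tiles (RR (2*m-3) (2*m-4)) + num_tilings (RR (2*m-3) (2*m-4))"
proof -
  have cR: "(Up (m-1) 0) \<in> (insert (Up (m-1) 0) (RR (2*m-3) (2*m-4)))" using m by simp
  have k1: "\<not> ((Up (m-1) 0) \<in> bigUp a b \<and> bigUp a b \<subseteq> (insert (Up (m-1) 0) (RR (2*m-3) (2*m-4))))" for a b
    using m unfolding insert_subset by (simp add: bigUp_def; arith?)
  have k2: "\<not> ((Up (m-1) 0) \<in> bigDn a b \<and> bigDn a b \<subseteq> (insert (Up (m-1) 0) (RR (2*m-3) (2*m-4))))" for a b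
    using m unfolding insert_subset by (simp add: bigDn_def; arith?)
  have C: "{t\<in>tiles. (Up (m-1) 0)\<in>t \<and> t\<subseteq>(insert (Up (m-1) 0) (RR (2*m-3) (2*m-4)))} = {{(Up (m-1) 0)}}"
    unfolding tiles_C[OF cR] setU0[OF k1] setU0[OF k2] by auto
  have r1: "(insert (Up (m-1) 0) (RR (2*m-3) (2*m-4))) - {(Up (m-1) 0)} = (RR (2*m-3) (2*m-4))"
    using m by (rule_tac set_eqI, (case_tac x; (auto; presburger?)))
  note s = step1[OF _ cR C]
  show "num_tilings (insert (Up (m-1) 0) (RR (2*m-3) (2*m-4))) = num_tilings (RR (2*m-3) (2*m-4))"
    using s(1) r1 by (simp add: finite_RR)
  show "total_tiles (insert (Up (m-1) 0) (RR (2*m-3) (2*m-4))) = total_tiles (RR (2*m-3) (2*m-4)) + num_tilings (RR (2*m-3) (2*m-4))"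
    using s(2) r1 by (simp add: finite_RR)
qed

lemma stepH1:
  fixes m :: int assumes m: "m = 1"
  shows "num_tilings (RR 1 1) = num_tilings (RR 1 0)"
    and "total_tiles (RR 1 1) = total_tiles (RR 1 0) + num_tilings (RR 1 0)"
proof -
  have cR: "(Dn (-1) 1) \<in> (RR 1 1)" using m by simp
  have k1: "\<not> ((Dn (-1) 1) \<in> bigUp a b \<and> bigUp a b \<subseteq> (RR 1 1))" for a b
    using m unfolding bigUp_sub by (simp add: bigUp_def; arith?)
  have k2: "\<not> ((Dn (-1) 1) \<in> bigDn a b \<and> bigDn a b \<subseteq> (RR 1 1))" for a b
    using m unfolding bigDn_sub by (simp add: bigDn_def; arith?)
  have C: "{t\<in>tiles. (Dn (-1) 1)\<in>t \<and> t\<subseteq>(RR 1 1)} = {{(Dn (-1) 1)}}"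
    unfolding tiles_C[OF cR] setU0[OF k1] setU0[OF k2] by auto
  have r1: "(RR 1 1) - {(Dn (-1) 1)} = (RR 1 0)"
    using m by (rule_tac set_eqI, (case_tac x; (auto; presburger?)))
  note s = step1[OF _ cR C]
  show "num_tilings (RR 1 1) = num_tilings (RR 1 0)"
    using s(1) r1 by (simp add: finite_RR)
  show "total_tiles (RR 1 1) = total_tiles (RR 1 0) + num_tilings (RR 1 0)"
    using s(2) r1 by (simp add: finite_RR)
qed

lemma stepQ1:
  fixes m :: int assumes m: "m = 1"
  shows "num_tilings (RR 1 0) = num_tilings (RR 0 0)"
    and "total_tiles (RR 1 0) = total_tiles (RR 0 0) + num_tilings (RR 0 0)"
proof -
  have cR: "(Up 0 0) \<in> (RR 1 0)" using m by simp
  have k1: "\<not> ((Up 0 0) \<in> bigUp a b \<and> bigUp a b \<subseteq> (RR 1 0))" for a b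
    using m unfolding bigUp_sub by (simp add: bigUp_def; arith?)
  have k2: "\<not> ((Up 0 0) \<in> bigDn a b \<and> bigDn a b \<subseteq> (RR 1 0))" for a b
    using m unfolding bigDn_sub by (simp add: bigDn_def; arith?)
  have C: "{t\<in>tiles. (Up 0 0)\<in>t \<and> t\<subseteq>(RR 1 0)} = {{(Up 0 0)}}"
    unfolding tiles_C[OF cR] setU0[OF k1] setU0[OF k2] by auto
  have r1: "(RR 1 0) - {(Up 0 0)} = (RR 0 0)"
    using m by (rule_tac set_eqI, (case_tac x; (auto; presburger?)))
  note s = step1[OF _ cR C]
  show "num_tilings (RR 1 0) = num_tilings (RR 0 0)"
    using s(1) r1 by (simp add: finite_RR)
  show "total_tiles (RR 1 0) = total_tiles (RR 0 0) + num_tilings (RR 0 0)"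
    using s(2) r1 by (simp add: finite_RR)
qed

lemma stepP1:
  fixes m :: int assumes m: "m = 1"
  shows "num_tilings (RR 0 1) = num_tilings (RR 0 0)"
    and "total_tiles (RR 0 1) = total_tiles (RR 0 0) + num_tilings (RR 0 0)"
proof -
  have cR: "(Dn (-1) 1) \<in> (RR 0 1)" using m by simp
  have k1: "\<not> ((Dn (-1) 1) \<in> bigUp a b \<and> bigUp a b \<subseteq> (RR 0 1))" for a b
    using m unfolding bigUp_sub by (simp add: bigUp_def; arith?)
  have k2: "\<not> ((Dn (-1) 1) \<in> bigDn a b \<and> bigDn a b \<subseteq> (RR 0 1))" for a b
    using m unfolding bigDn_sub by (simp add: bigDn_def; arith?)
  have C: "{t\<in>tiles. (Dn (-1) 1)\<in>t \<and> t\<subseteq>(RR 0 1)} = {{(Dn (-1) 1)}}"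
    unfolding tiles_C[OF cR] setU0[OF k1] setU0[OF k2] by auto
  have r1: "(RR 0 1) - {(Dn (-1) 1)} = (RR 0 0)"
    using m by (rule_tac set_eqI, (case_tac x; (auto; presburger?)))
  note s = step1[OF _ cR C]
  show "num_tilings (RR 0 1) = num_tilings (RR 0 0)"
    using s(1) r1 by (simp add: finite_RR)
  show "total_tiles (RR 0 1) = total_tiles (RR 0 0) + num_tilings (RR 0 0)"
    using s(2) r1 by (simp add: finite_RR)
qed

lemma RR00: "RR 0 0 = {}"
  by (rule set_eqI, (case_tac x; auto))


lemma Hreg_RR: "Hreg n = RR (2*int n-1) (2*int n-1)"
  by (rule set_eqI, (case_tac x; (auto simp: Hreg_def; presburger?)))

lemma Preg_RR: "Preg n = RR (2*int n-2) (2*int n-1)"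
  by (rule set_eqI, (case_tac x; (auto simp: Preg_def Hreg_def; presburger?)))

definition "NH m = real (num_tilings (RR (2*m-1) (2*m-1)))"
definition "SH m = real (total_tiles (RR (2*m-1) (2*m-1)))"
definition "NQ m = real (num_tilings (RR (2*m-1) (2*m-2)))"
definition "SQ m = real (total_tiles (RR (2*m-1) (2*m-2)))"
definition "NP m = real (num_tilings (RR (2*m-2) (2*m-1)))"
definition "SP m = real (total_tiles (RR (2*m-2) (2*m-1)))"
definition "NE m = real (num_tilings (RR (2*m-2) (2*m-2)))"
definition "SE m = real (total_tiles (RR (2*m-2) (2*m-2)))"

lemma rE:
  fixes m :: int assumes m: "m \<ge> 2"
  shows "NE m = NH (m-1)" "SE m = SH (m-1) + 2 * NH (m-1)"
proof -
  have a: "2*(m-1)-1 = 2*m-3" and b: "2*(m-1) = 2*m-2" by simp_all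
  note f = stepF[of "m-1", unfolded a b]
  have m1: "m - 1 \<ge> 1" using m by simp
  show "NE m = NH (m-1)" using stepE(1)[OF m] f(1)[OF m1] unfolding NE_def NH_def a by simp
  show "SE m = SH (m-1) + 2 * NH (m-1)" using stepE[OF m] f[OF m1] unfolding SE_def SH_def NH_def a by simp
qed

lemma rQ:
  fixes m :: int assumes m: "m \<ge> 2"
  shows "NQ m = NE m + NP (m-1)" "SQ m = SE m + NE m + SP (m-1) + NP (m-1)"
proof -
  have a: "2*(m-1)-1 = 2*m-3" and b: "2*(m-1)-2 = 2*m-4" by simp_all
  show "NQ m = NE m + NP (m-1)" using stepQ(1)[OF m] unfolding NQ_def NE_def NP_def a b by simp
  show "SQ m = SE m + NE m + SP (m-1) + NP (m-1)" using stepQ(2)[OF m]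
    unfolding SQ_def SE_def NE_def SP_def NP_def a b by simp
qed

lemma rP:
  fixes m :: int assumes m: "m \<ge> 2"
  shows "NP m = NE m + NQ (m-1)" "SP m = SE m + NE m + SQ (m-1) + NQ (m-1)"
proof -
  have a: "2*(m-1)-1 = 2*m-3" and b: "2*(m-1)-2 = 2*m-4" by simp_all
  show "NP m = NE m + NQ (m-1)" using stepP(1)[OF m] unfolding NP_def NE_def NQ_def a b by simp
  show "SP m = SE m + NE m + SQ (m-1) + NQ (m-1)" using stepP(2)[OF m]
    unfolding SQ_def SE_def NE_def SP_def NP_def NQ_def a b by simp
qed

lemma rH:
  fixes m :: int assumes m: "m \<ge> 2"
  shows "NH m = NQ m + NQ (m-1)" "SH m = SQ m + NQ m + SQ (m-1) + 2 * NQ (m-1)"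
proof -
  have a: "2*(m-1)-1 = 2*m-3" and b: "2*(m-1)-2 = 2*m-4" by simp_all
  show "NH m = NQ m + NQ (m-1)" using stepH(1)[OF m] stepX(1)[OF m] unfolding NH_def NQ_def a b by simp
  show "SH m = SQ m + NQ m + SQ (m-1) + 2 * NQ (m-1)" using stepH[OF m] stepX[OF m]
    unfolding SH_def NH_def SQ_def NQ_def a b by simp
qed

lemma base_vals:
  "NH 1 = 1" "SH 1 = 2" "NQ 1 = 1" "SQ 1 = 1" "NP 1 = 1" "SP 1 = 1"
  using stepH1[OF refl] stepQ1[OF refl] stepP1[OF refl]
  by (simp_all add: NH_def SH_def NQ_def SQ_def NP_def SP_def RR00 num_empty total_empty)

lemma alg1: fixes x a b :: real
  shows "5/2*x*a + 3/2*b - 2*a + 3*a + ((5*x-3)/2*b + b) = (5*x+2)/2*(a+b)"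
  by (simp add: field_simps)

lemma alg2: fixes x c b :: real
  shows "(5*x+2)/2*c + c + (5*x-3)/2*b + 2*b = 5/2*(x+1)*(c+b) + 3/2*c - 2*(c+b)"
  by (simp add: field_simps)

lemma main:
  fixes m :: int assumes "m \<ge> 1"
  shows "NQ m = NP m \<and> SQ m = SP m \<and> SP m = (5*m-3)/2 * NP m
         \<and> SH m = 5/2 * m * NH m + 3/2 * NP m - 2 * NH m"
  using assms
proof (induction m rule: int_ge_induct)
  case base
  then show ?case using base_vals by simp
next
  case (step i)
  have m: "i + 1 \<ge> 2" using step by simp
  note e = rE[OF m] and q = rQ[OF m] and p = rP[OF m] and h = rH[OF m]
  have ii: "i + 1 - 1 = i" by simp
  note e = e[unfolded ii] and q = q[unfolded ii] and p = p[unfolded ii] and h = h[unfolded ii]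
  note IH = step.IH
  have c1: "NQ (i+1) = NP (i+1)" using e q p IH by linarith
  have c2: "SQ (i+1) = SP (i+1)" using e q p IH by linarith
  have NP1: "NP (i+1) = NH i + NP i" using e p IH by linarith
  have SP1: "SP (i+1) = SH i + 3 * NH i + (SP i + NP i)" using e p IH by linarith
  have ri: "real_of_int (i+1) = real_of_int i + 1" by simp
  have r5: "real_of_int (5*(i+1)-3) = 5 * real_of_int i + 2" by simp
  have c3: "SP (i+1) = real_of_int (5*(i+1)-3)/2 * NP (i+1)"
    unfolding SP1 NP1 r5 using IH alg1[of "real_of_int i" "NH i" "NP i"] by simp
  have sp: "SP i = (5*real_of_int i - 3)/2 * NP i" using IH by simp
  have cc: "SP (i+1) = (5*real_of_int i + 2)/2 * NP (i+1)" using c3 unfolding r5 .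
  have NH1: "NH (i+1) = NP (i+1) + NP i" using h c1 IH by linarith
  have SH1: "SH (i+1) = SP (i+1) + NP (i+1) + SP i + 2 * NP i" using h c1 c2 IH by linarith
  have c4: "SH (i+1) = 5/2 * real_of_int (i+1) * NH (i+1) + 3/2 * NP (i+1) - 2 * NH (i+1)"
    unfolding SH1 NH1 ri cc sp by (rule alg2)
  show ?case using c1 c2 c3 c4 by blast
qed

theorem theorem6:
  fixes n :: nat
  assumes "n \<ge> 1"
  shows "real (hsum n) = 5/2 * real n * real (H n) + 3/2 * real (P n) - 2 * real (H n)
     \<and> real (psum n) = 5/2 * real n * real (P n) - 3/2 * real (P n)
     \<and> 5/2 * real n * real (P n) - 3/2 * real (P n) = (5 * real n - 3) / 2 * real (P n)"
proof -
  have m: "int n \<ge> 1" using assms by simp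
  note M = main[OF m]
  have h: "real (hsum n) = SH (int n)" "real (H n) = NH (int n)"
    by (simp_all add: SH_def NH_def Hreg_RR)
  have p: "real (psum n) = SP (int n)" "real (P n) = NP (int n)"
    by (simp_all add: SP_def NP_def Preg_RR)
  have r: "real_of_int (int n) = real n" by simp
  have M4: "SH (int n) = 5/2 * real n * NH (int n) + 3/2 * NP (int n) - 2 * NH (int n)"
    using M unfolding r by blast
  have r5: "real_of_int (5 * int n - 3) = 5 * real n - 3" by simp
  have M3: "SP (int n) = (5 * real n - 3) / 2 * NP (int n)"
    using M unfolding r5 by blast
  have alg: "5/2 * real n * x - 3/2 * x = (5 * real n - 3) / 2 * x" for x :: real
    by (simp add: field_simps)
  show ?thesis unfolding h p
  proof (intro conjI)
    show "SH (int n) = 5/2 * real n * NH (int n) + 3/2 * NP (int n) - 2 * NH (int n)" by (rule M4)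
    show "SP (int n) = 5/2 * real n * NP (int n) - 3/2 * NP (int n)" unfolding alg M3 by (rule refl)
    show "5/2 * real n * NP (int n) - 3/2 * NP (int n) = (5 * real n - 3) / 2 * NP (int n)" by (rule alg)
  qed
qed

end
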